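(* Let $P$ be a generic regular pentagon in $\mathbb{R}^3$ and $u_1,\ldots,u_5$ a support system of $P$. Then the derived pentagon $P'=B_1\ldots B_5$ is a plane pentagon (all five vertices are coplanar) with oriented area $0$.
   Context: For a closed polygon $P=A_1\ldots A_n$ in $\mathbb{R}^3$ put $v_1=\overline{A_1A_2},\ldots,v_n=\overline{A_nA_1}$, indices cyclic mod $n$. $P$ is generic if any two consecutive $v_i,v_{i+1}$ are not collinear and any three consecutive $v_i,v_{i+1},v_{i+2}$ are not coplanar. A support system of $P$ is a tuple $u_1,\ldots,u_n$ with $[u_i,u_{i+1}]=v_{i+1}$ for all $i$ (cyclically; $[\cdot,\cdot]$ is the cross product). A generic polygon is regular if it has a support system. Given a support system, fix an origin $O$ and let $B_i$ be the point with $\overline{OB_i}=u_i$; the polygon $P'=B_1\ldots B_n$ is the derived polygon of $P$. A closed polygon $B_1\ldots B_n$ has oriented area $0$ if $\sum_{i=1}^n[\overline{OB_i},\overline{OB_{i+1}}]=0$ (independent of $O$); for a plane polygon this means its signed area in its plane is zero. *)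

theory Defs
  imports "HOL-Analysis.Analysis"
begin

definition edge :: "nat \<Rightarrow> (nat \<Rightarrow> real^3) \<Rightarrow> nat \<Rightarrow> real^3" where
  "edge n A i = A (Suc i mod n) - A (i mod n)"

definition generic_polygon :: "nat \<Rightarrow> (nat \<Rightarrow> real^3) \<Rightarrow> bool" where
  "generic_polygon n A \<longleftrightarrow>
     (\<forall>i<n. \<not> collinear {0, edge n A i, edge n A (Suc i)}) \<and>
     (\<forall>i<n. \<not> coplanar {0, edge n A i, edge n A (Suc i), edge n A (Suc (Suc i))})"

definition support_system :: "nat \<Rightarrow> (nat \<Rightarrow> real^3) \<Rightarrow> (nat \<Rightarrow> real^3) \<Rightarrow> bool" where
  "support_system n A u \<longleftrightarrow>
     (\<forall>i<n. cross3 (u i) (u (Suc i mod n)) = edge n A (Suc i))"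

definition regular_polygon :: "nat \<Rightarrow> (nat \<Rightarrow> real^3) \<Rightarrow> bool" where
  "regular_polygon n A \<longleftrightarrow> generic_polygon n A \<and> (\<exists>u. support_system n A u)"

definition oriented_area_zero :: "nat \<Rightarrow> (nat \<Rightarrow> real^3) \<Rightarrow> bool" where
  "oriented_area_zero n B \<longleftrightarrow> (\<Sum>i<n. cross3 (B i) (B (Suc i mod n))) = 0"

end

theory Submission
  imports Defs
begin

lemma cramer3:
  fixes x y z :: "real^3"
  shows "((cross3 y z) \<bullet> (cross3 y z)) *\<^sub>R x =
     ((cross3 x z) \<bullet> (cross3 y z)) *\<^sub>R y + ((cross3 y x) \<bullet> (cross3 y z)) *\<^sub>R z
     + (x \<bullet> cross3 y z) *\<^sub>R cross3 y z"
  by (simp add: vec_eq_iff forall_3 cross3_def inner_vec_def sum_3 algebra_simps power2_eq_square)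

lemma in_span2:
  fixes x y z :: "real^3"
  assumes "cross3 y z \<noteq> 0" "x \<bullet> cross3 y z = 0"
  shows "\<exists>s t. x = s *\<^sub>R y + t *\<^sub>R z"
proof -
  let ?n = "cross3 y z"
  have N: "?n \<bullet> ?n \<noteq> 0" using assms(1) by simp
  have "(?n \<bullet> ?n) *\<^sub>R x = ((cross3 x z) \<bullet> ?n) *\<^sub>R y + ((cross3 y x) \<bullet> ?n) *\<^sub>R z"
    using cramer3[of y z x] assms(2) by simp
  hence "inverse (?n \<bullet> ?n) *\<^sub>R ((?n \<bullet> ?n) *\<^sub>R x) = inverse (?n \<bullet> ?n) *\<^sub>R (((cross3 x z) \<bullet> ?n) *\<^sub>R y + ((cross3 y x) \<bullet> ?n) *\<^sub>R z)"
    by simp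
  hence "x = (inverse (?n \<bullet> ?n) * ((cross3 x z) \<bullet> ?n)) *\<^sub>R y + (inverse (?n \<bullet> ?n) * ((cross3 y x) \<bullet> ?n)) *\<^sub>R z"
    using N by (simp add: scaleR_add_right)
  thus ?thesis by blast
qed

lemma par:
  fixes y z :: "real^3"
  assumes "cross3 y z = 0" "z \<noteq> 0"
  shows "\<exists>c. y = c *\<^sub>R z"
proof -
  have "collinear {0, z, y}" using assms(1) cross_eq_0[of z y]
    by (metis cross_skew neg_equal_0_iff_equal)
  thus ?thesis using assms(2) collinear_lemma[of z y] by (metis scaleR_zero_left)
qed

lemma plane4:
  fixes a1 a2 a3 a4 :: "real^3"
  assumes E: "cross3 a1 a2 + cross3 a2 a3 + cross3 a3 a4 = 0"
  shows "\<exists>p q. \<forall>x\<in>{0,a1,a2,a3,a4}. \<exists>s t. x = s *\<^sub>R p + t *\<^sub>R q"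
proof -
  have D1: "a1 \<bullet> cross3 a2 a3 = 0"
    using arg_cong[OF E, of "\<lambda>v. a3 \<bullet> v"]
    by (simp add: inner_add_right cross3_def inner_vec_def sum_3 algebra_simps)
  have D2: "a4 \<bullet> cross3 a2 a3 = 0"
    using arg_cong[OF E, of "\<lambda>v. a2 \<bullet> v"]
    by (simp add: inner_add_right cross3_def inner_vec_def sum_3 algebra_simps)
  have D3: "a4 \<bullet> cross3 a1 a3 = 0"
    using arg_cong[OF E, of "\<lambda>v. a1 \<bullet> v"] D1
    by (simp add: inner_add_right cross3_def inner_vec_def sum_3 algebra_simps)
  have z: "\<exists>s t. (0::real^3) = s *\<^sub>R p + t *\<^sub>R q" for p q
    by (rule exI[of _ 0], rule exI[of _ 0]) simp
  have sp: "\<exists>s t. p = s *\<^sub>R p + t *\<^sub>R q" for p q :: "real^3"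
    by (rule exI[of _ 1], rule exI[of _ 0]) simp
  have sq: "\<exists>s t. q = s *\<^sub>R p + t *\<^sub>R q" for p q :: "real^3"
    by (rule exI[of _ 0], rule exI[of _ 1]) simp
  have sc: "\<exists>s t. c *\<^sub>R p = s *\<^sub>R p + t *\<^sub>R q" for p q :: "real^3" and c
    by (rule exI[of _ c], rule exI[of _ 0]) simp
  have sc2: "\<exists>s t. c *\<^sub>R q = s *\<^sub>R p + t *\<^sub>R q" for p q :: "real^3" and c
    by (rule exI[of _ 0], rule exI[of _ c]) simp
  show ?thesis
  proof (cases "a3 = 0")
    case True
    hence "cross3 a1 a2 = 0" using E by simp
    show ?thesis
    proof (cases "a1 = 0")
      case True
      show ?thesis
        by (rule exI[of _ a2], rule exI[of _ a4]) (use True \<open>a3 = 0\<close> z sp sq in auto)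
    next
      case False
      obtain c where "a2 = c *\<^sub>R a1"
        using par[of a2 a1] \<open>cross3 a1 a2 = 0\<close> False
        by (metis cross_skew neg_equal_0_iff_equal)
      thus ?thesis
        by (intro exI[of _ a1] exI[of _ a4]) (use \<open>a3 = 0\<close> z sp sq sc in auto)
    qed
  next
    case a3: False
    show ?thesis
    proof (cases "cross3 a2 a3 = 0")
      case False
      show ?thesis
        by (intro exI[of _ a2] exI[of _ a3])
          (use in_span2[OF False D1] in_span2[OF False D2] z sp sq in auto)
    next
      case True
      obtain c where c: "a2 = c *\<^sub>R a3" using par[OF True a3] by blast
      show ?thesis
      proof (cases "cross3 a1 a3 = 0")
        case False
        show ?thesis
          by (intro exI[of _ a1] exI[of _ a3])
            (use in_span2[OF False D3] c z sp sq sc2 in auto)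
      next
        case True
        obtain d where d: "a1 = d *\<^sub>R a3" using par[OF True a3] by blast
        show ?thesis
          by (intro exI[of _ a3] exI[of _ a4]) (use c d z sp sq sc in auto)
      qed
    qed
  qed
qed

lemma sum5: "(\<Sum>i<5. f i) = f 0 + f 1 + f 2 + f 3 + (f 4::'a::comm_monoid_add)" for f :: "nat \<Rightarrow> 'a::comm_monoid_add"
proof -
  have "{..<5::nat} = {0,1,2,3,4}" by auto
  thus ?thesis by (simp add: ac_simps)
qed
lemma m: "Suc 0 mod 5 = 1" "Suc 1 mod 5 = 2" "Suc 2 mod 5 = 3" "Suc 3 mod 5 = 4" "Suc 4 mod 5 = 0"
  "Suc 0 = 1" "Suc 1 = 2" "Suc 2 = 3" "Suc 3 = 4" "Suc 4 = 5"
  by simp_all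
lemma edge_sum5: "(\<Sum>i<5. edge 5 A (Suc i)) = 0"
  unfolding sum5 edge_def m by simp
lemma expand5:
  "(\<Sum>i<5. cross3 ((u::nat\<Rightarrow>real^3) i) (u (Suc i mod 5))) = 0 \<Longrightarrow>
   cross3 (u 0) (u 1) + cross3 (u 1) (u 2) + cross3 (u 2) (u 3) + cross3 (u 3) (u 4)
      + cross3 (u 4) (u 0) = 0"
  unfolding sum5 m by simp
lemma transl5:
  fixes u :: "nat \<Rightarrow> real^3"
  shows "cross3 (u 1 - u 0) (u 2 - u 0) + cross3 (u 2 - u 0) (u 3 - u 0) + cross3 (u 3 - u 0) (u 4 - u 0) =
      cross3 (u 0) (u 1) + cross3 (u 1) (u 2) + cross3 (u 2) (u 3) + cross3 (u 3) (u 4)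
      + cross3 (u 4) (u 0)"
  by (simp add: vec_eq_iff forall_3 cross3_def algebra_simps)
lemma img5:
  fixes u :: "nat \<Rightarrow> real^3"
  shows "u ` {..<5} = {u 0 + 0, u 0 + (u 1 - u 0), u 0 + (u 2 - u 0), u 0 + (u 3 - u 0), u 0 + (u 4 - u 0)}"
proof -
  have "{..<5::nat} = {0,1,2,3,4}" by auto
  thus ?thesis by simp
qed

theorem theorem4p1:
  fixes A u :: "nat \<Rightarrow> real^3"
  assumes "regular_polygon 5 A"
    and "support_system 5 A u"
  shows "coplanar (u ` {..<5}) \<and> oriented_area_zero 5 u"
proof -
  have S: "\<And>i. i < 5 \<Longrightarrow> cross3 (u i) (u (Suc i mod 5)) = edge 5 A (Suc i)"
    using assms(2) unfolding support_system_def by blast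
  have sum_eq: "(\<Sum>i<5. cross3 (u i) (u (Suc i mod 5))) = (\<Sum>i<5. edge 5 A (Suc i))"
    using S by (intro sum.cong) auto
  have "(\<Sum>i<5. edge 5 A (Suc i)) = 0"
    by (rule edge_sum5)
  hence OA: "(\<Sum>i<5. cross3 (u i) (u (Suc i mod 5))) = 0" using sum_eq by simp
  hence E0: "cross3 (u 0) (u 1) + cross3 (u 1) (u 2) + cross3 (u 2) (u 3) + cross3 (u 3) (u 4)
      + cross3 (u 4) (u 0) = 0"
    by (rule expand5)
  define a1 where "a1 = u 1 - u 0"
  define a2 where "a2 = u 2 - u 0"
  define a3 where "a3 = u 3 - u 0"
  define a4 where "a4 = u 4 - u 0"
  have E: "cross3 a1 a2 + cross3 a2 a3 + cross3 a3 a4 = 0"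
  proof -
    have "cross3 a1 a2 + cross3 a2 a3 + cross3 a3 a4 =
      cross3 (u 0) (u 1) + cross3 (u 1) (u 2) + cross3 (u 2) (u 3) + cross3 (u 3) (u 4)
      + cross3 (u 4) (u 0)"
      unfolding a1_def a2_def a3_def a4_def by (rule transl5)
    thus ?thesis using E0 by simp
  qed
  obtain p q where pq: "\<forall>x\<in>{0,a1,a2,a3,a4}. \<exists>s t. x = s *\<^sub>R p + t *\<^sub>R q"
    using plane4[OF E] by blast
  have img: "u ` {..<5} = {u 0 + 0, u 0 + a1, u 0 + a2, u 0 + a3, u 0 + a4}"
    unfolding a1_def a2_def a3_def a4_def by (rule img5)
  have "u ` {..<5} \<subseteq> affine hull {u 0, u 0 + p, u 0 + q}"
  proof
    fix y assume "y \<in> u ` {..<5}"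
    hence "y \<in> {u 0 + 0, u 0 + a1, u 0 + a2, u 0 + a3, u 0 + a4}" using img by simp
    then obtain x where x: "x \<in> {0,a1,a2,a3,a4}" and y: "y = u 0 + x" by blast
    obtain s t where "x = s *\<^sub>R p + t *\<^sub>R q" using pq x by blast
    hence "y = (1 - s - t) *\<^sub>R u 0 + s *\<^sub>R (u 0 + p) + t *\<^sub>R (u 0 + q)"
      using y by (simp add: algebra_simps)
    thus "y \<in> affine hull {u 0, u 0 + p, u 0 + q}"
      unfolding affine_hull_3 by force
  qed
  hence "coplanar (u ` {..<5})" unfolding coplanar_def by (intro exI)
  thus ?thesis using OA unfolding oriented_area_zero_def by (rule conjI)
qed

end
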